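(* Fix a ROMDP satisfying Assumptions 1 and 2 below, and a deterministic observation-based policy $\pi:\mathcal Y\to\mathcal A$. For every action $l\in\mathcal A$ and every hidden state $i\in\mathcal X_\pi^{(l)}$ let $\mathcal Y_i^{(l)}=\{j\in[Y]:[V_2^{(l)}]_{j,i}>0\}$ be the observations clustered together according to $V_2^{(l)}$, and let $\mathcal Y^{\mathsf c}=\mathcal Y\setminus\bigcup_{i,l}\mathcal Y_i^{(l)}$ be the observations not clustered. Let the auxiliary state space $\mathcal S$ consist of all the clusters $\mathcal Y_i^{(l)}$ ($l\in\mathcal A$, $i\in\mathcal X_\pi^{(l)}$) together with the singletons $\{j\}$, $j\in\mathcal Y^{\mathsf c}$. Then the total number of elements of $\mathcal S$ satisfies $S=|\mathcal S|\le AX$.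
   Context: A rich-observation MDP (ROMDP) consists of finite sets of hidden states $\mathcal X=[X]$, observations $\mathcal Y=[Y]$ and actions $\mathcal A=[A]$ with $X\le Y$; a transition tensor $T\in\mathbb R^{X\times X\times A}$, $T_{i',i,l}=\mathbb P(x'=i'\mid x=i,a=l)$; an observation matrix $O\in\mathbb R^{Y\times X}$, $O_{j,i}=\mathbb P(y=j\mid x=i)$, such that every observation $j$ has exactly one hidden state $x_j$ with $O_{j,x_j}>0$ (so the sets $\mathcal Y_i=\{j:O_{j,i}>0\}$ partition $\mathcal Y$); rewards in $[0,1]$ whose mean depends only on hidden state and action. The agent only observes $y_t$ and rewards. Assumption 1: for every deterministic policy $\pi:\mathcal Y\to\mathcal A$ the Markov chain induced on hidden states is ergodic. Assumption 2: for every action $l$ the matrix $T_{\cdot,\cdot,l}\in\mathbb R^{X\times X}$ is full rank. For a policy $\pi$, let $\omega_\pi^{(l)}(i)=\mathbb P_\pi(x=i\mid a=l)$ under the stationary distribution and $\mathcal X_\pi^{(l)}=\{i:\omega_\pi^{(l)}(i)>0\}$. Consider three consecutive steps $t-1,t,t+1$ of the stationary process under $\pi$, relabelled $1,2,3$, and let $\vec v_1,\vec v_2,\vec v_3\in\{0,1\}^Y$ be the one-hot encodings of $y_{t-1},y_t,y_{t+1}$; $x_2,a_2$ denote the hidden state and action at time $t$. The factor matrix $V_2^{(l)}\in\mathbb R^{Y\times|\mathcal X_\pi^{(l)}|}$ is $[V_2^{(l)}]_{j,i}=\mathbb P(\vec v_2=e_j\mid x_2=i,a_2=l)$ for $i\in\mathcal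 X_\pi^{(l)}$. *)

theory Defs
  imports Complex_Main "Jordan_Normal_Form.DL_Rank"
begin

text \<open>Indices: hidden states 0..<X, observations 0..<Y, actions 0..<A.
  T i' i l = P(x' = i' | x = i, a = l);  Ob j i = P(y = j | x = i).\<close>

definition romdp ::
  "nat \<Rightarrow> nat \<Rightarrow> nat \<Rightarrow> (nat \<Rightarrow> nat \<Rightarrow> nat \<Rightarrow> real) \<Rightarrow> (nat \<Rightarrow> nat \<Rightarrow> real)
    \<Rightarrow> (nat \<Rightarrow> nat \<Rightarrow> real) \<Rightarrow> bool" where
  "romdp X Y A T Ob R \<longleftrightarrow>
     0 < X \<and> X \<le> Y \<and> 0 < A \<and>
     (\<forall>i'<X. \<forall>i<X. \<forall>l<A. 0 \<le> T i' i l) \<and>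
     (\<forall>i<X. \<forall>l<A. (\<Sum>i'<X. T i' i l) = 1) \<and>
     (\<forall>j<Y. \<forall>i<X. 0 \<le> Ob j i) \<and>
     (\<forall>i<X. (\<Sum>j<Y. Ob j i) = 1) \<and>
     (\<forall>j<Y. \<exists>!i. i < X \<and> 0 < Ob j i) \<and>
     (\<forall>i<X. \<forall>l<A. 0 \<le> R i l \<and> R i l \<le> 1)"

definition policy :: "nat \<Rightarrow> nat \<Rightarrow> (nat \<Rightarrow> nat) \<Rightarrow> bool" where
  "policy Y A \<pi> \<longleftrightarrow> (\<forall>j<Y. \<pi> j < A)"

definition induced_kernel ::
  "nat \<Rightarrow> (nat \<Rightarrow> nat \<Rightarrow> nat \<Rightarrow> real) \<Rightarrow> (nat \<Rightarrow> nat \<Rightarrow> real) \<Rightarrow> (nat \<Rightarrow> nat)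
    \<Rightarrow> nat \<Rightarrow> nat \<Rightarrow> real" where
  "induced_kernel Y T Ob \<pi> i' i = (\<Sum>j<Y. Ob j i * T i' i (\<pi> j))"

fun nstep :: "nat \<Rightarrow> (nat \<Rightarrow> nat \<Rightarrow> real) \<Rightarrow> nat \<Rightarrow> nat \<Rightarrow> nat \<Rightarrow> real" where
  "nstep X P 0 i' i = (if i' = i then 1 else 0)"
| "nstep X P (Suc n) i' i = (\<Sum>k<X. P i' k * nstep X P n k i)"

definition ergodic :: "nat \<Rightarrow> (nat \<Rightarrow> nat \<Rightarrow> real) \<Rightarrow> bool" where
  "ergodic X P \<longleftrightarrow>
     (\<forall>i<X. \<forall>i'<X. \<exists>n. 0 < nstep X P n i' i) \<and>
     (\<forall>i<X. Gcd {n. 0 < n \<and> 0 < nstep X P n i i} = 1)"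

definition assumption1 ::
  "nat \<Rightarrow> nat \<Rightarrow> nat \<Rightarrow> (nat \<Rightarrow> nat \<Rightarrow> nat \<Rightarrow> real) \<Rightarrow> (nat \<Rightarrow> nat \<Rightarrow> real) \<Rightarrow> bool" where
  "assumption1 X Y A T Ob \<longleftrightarrow>
     (\<forall>\<pi>. policy Y A \<pi> \<longrightarrow> ergodic X (induced_kernel Y T Ob \<pi>))"

definition assumption2 :: "nat \<Rightarrow> nat \<Rightarrow> (nat \<Rightarrow> nat \<Rightarrow> nat \<Rightarrow> real) \<Rightarrow> bool" where
  "assumption2 X A T \<longleftrightarrow>
     (\<forall>l<A. vec_space.rank X (mat X X (\<lambda>(i', i). T i' i l) :: real mat) = X)"

definition stationary :: "nat \<Rightarrow> (nat \<Rightarrow> nat \<Rightarrow> real) \<Rightarrow> (nat \<Rightarrow> real) \<Rightarrow> bool" where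
  "stationary X P \<rho> \<longleftrightarrow>
     (\<forall>i<X. 0 \<le> \<rho> i) \<and> (\<Sum>i<X. \<rho> i) = 1 \<and>
     (\<forall>i'<X. \<rho> i' = (\<Sum>i<X. P i' i * \<rho> i))"

text \<open>Joint stationary probability P(x = i, a = l) under policy pi.\<close>
definition joint_xa ::
  "nat \<Rightarrow> (nat \<Rightarrow> nat \<Rightarrow> real) \<Rightarrow> (nat \<Rightarrow> nat) \<Rightarrow> (nat \<Rightarrow> real) \<Rightarrow> nat \<Rightarrow> nat \<Rightarrow> real" where
  "joint_xa Y Ob \<pi> \<rho> i l = \<rho> i * (\<Sum>j\<in>{j. j < Y \<and> \<pi> j = l}. Ob j i)"

definition omega ::
  "nat \<Rightarrow> nat \<Rightarrow> (nat \<Rightarrow> nat \<Rightarrow> real) \<Rightarrow> (nat \<Rightarrow> nat) \<Rightarrow> (nat \<Rightarrow> real) \<Rightarrow> nat \<Rightarrow> nat \<Rightarrow> real" where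
  "omega X Y Ob \<pi> \<rho> l i = joint_xa Y Ob \<pi> \<rho> i l / (\<Sum>k<X. joint_xa Y Ob \<pi> \<rho> k l)"

definition Xsupp ::
  "nat \<Rightarrow> nat \<Rightarrow> (nat \<Rightarrow> nat \<Rightarrow> real) \<Rightarrow> (nat \<Rightarrow> nat) \<Rightarrow> (nat \<Rightarrow> real) \<Rightarrow> nat \<Rightarrow> nat set" where
  "Xsupp X Y Ob \<pi> \<rho> l = {i. i < X \<and> 0 < omega X Y Ob \<pi> \<rho> l i}"

text \<open>[V_2^(l)]_{j,i} = P(y_2 = j | x_2 = i, a_2 = l), where a_2 = pi(y_2).\<close>
definition V2 ::
  "nat \<Rightarrow> (nat \<Rightarrow> nat \<Rightarrow> real) \<Rightarrow> (nat \<Rightarrow> nat) \<Rightarrow> nat \<Rightarrow> nat \<Rightarrow> nat \<Rightarrow> real" where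
  "V2 Y Ob \<pi> l j i =
     (if \<pi> j = l then Ob j i else 0) / (\<Sum>j'\<in>{j'. j' < Y \<and> \<pi> j' = l}. Ob j' i)"

definition cluster ::
  "nat \<Rightarrow> (nat \<Rightarrow> nat \<Rightarrow> real) \<Rightarrow> (nat \<Rightarrow> nat) \<Rightarrow> nat \<Rightarrow> nat \<Rightarrow> nat set" where
  "cluster Y Ob \<pi> l i = {j. j < Y \<and> 0 < V2 Y Ob \<pi> l j i}"

definition unclustered ::
  "nat \<Rightarrow> nat \<Rightarrow> nat \<Rightarrow> (nat \<Rightarrow> nat \<Rightarrow> real) \<Rightarrow> (nat \<Rightarrow> nat) \<Rightarrow> (nat \<Rightarrow> real) \<Rightarrow> nat set" where
  "unclustered X Y A Ob \<pi> \<rho> =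
     {j. j < Y} - (\<Union>l\<in>{..<A}. \<Union>i\<in>Xsupp X Y Ob \<pi> \<rho> l. cluster Y Ob \<pi> l i)"

definition aux_states ::
  "nat \<Rightarrow> nat \<Rightarrow> nat \<Rightarrow> (nat \<Rightarrow> nat \<Rightarrow> real) \<Rightarrow> (nat \<Rightarrow> nat) \<Rightarrow> (nat \<Rightarrow> real) \<Rightarrow> nat set set" where
  "aux_states X Y A Ob \<pi> \<rho> =
     {cluster Y Ob \<pi> l i | l i. l < A \<and> i \<in> Xsupp X Y Ob \<pi> \<rho> l}
     \<union> {{j} | j. j \<in> unclustered X Y A Ob \<pi> \<rho>}"

end

theory Submission
  imports Defs
begin

lemma nstep_nonneg:
  assumes "\<And>a b. a < X \<Longrightarrow> b < X \<Longrightarrow> 0 \<le> P a b"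
  shows "a < X \<Longrightarrow> b < X \<Longrightarrow> 0 \<le> nstep X P n a b"
proof (induction n arbitrary: a b)
  case 0 then show ?case by simp
next
  case (Suc n)
  show ?case unfolding nstep.simps
  proof (rule sum_nonneg)
    fix k assume "k \<in> {..<X}"
    then show "0 \<le> P a k * nstep X P n k b" using Suc assms by simp
  qed
qed

lemma stat_nstep:
  assumes "stationary X P \<rho>"
  shows "i' < X \<Longrightarrow> \<rho> i' = (\<Sum>i<X. nstep X P n i' i * \<rho> i)"
proof (induction n arbitrary: i')
  case 0
  then have i0: "i' < X" by simp
  have "(\<Sum>i<X. nstep X P 0 i' i * \<rho> i) = (\<Sum>i<X. if i' = i then \<rho> i else 0)"
    by (rule sum.cong) auto
  also have "\<dots> = \<rho> i'" using i0 by (simp add: sum.delta)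
  finally show ?case by simp
next
  case (Suc n)
  have "(\<Sum>i<X. nstep X P (Suc n) i' i * \<rho> i) = (\<Sum>i<X. \<Sum>k<X. P i' k * (nstep X P n k i * \<rho> i))"
    by (simp add: sum_distrib_right mult.assoc)
  also have "\<dots> = (\<Sum>k<X. P i' k * (\<Sum>i<X. nstep X P n k i * \<rho> i))"
    by (subst sum.swap) (simp add: sum_distrib_left)
  also have "\<dots> = (\<Sum>k<X. P i' k * \<rho> k)"
    by (rule sum.cong) (use Suc.IH in \<open>simp_all only: lessThan_iff\<close>)
  also have "\<dots> = \<rho> i'" using assms Suc.prems unfolding stationary_def
    by (metis (no_types, lifting))
  finally show ?case by simp
qed

theorem lemma1:
  fixes X Y A :: nat
    and T :: "nat \<Rightarrow> nat \<Rightarrow> nat \<Rightarrow> real"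
    and Ob :: "nat \<Rightarrow> nat \<Rightarrow> real"
    and R :: "nat \<Rightarrow> nat \<Rightarrow> real"
    and \<pi> :: "nat \<Rightarrow> nat"
    and \<rho> :: "nat \<Rightarrow> real"
  assumes "romdp X Y A T Ob R"
    and "assumption1 X Y A T Ob"
    and "assumption2 X A T"
    and "policy Y A \<pi>"
    and "stationary X (induced_kernel Y T Ob \<pi>) \<rho>"
  shows "card (aux_states X Y A Ob \<pi> \<rho>) \<le> A * X"
proof -
  define P where "P = induced_kernel Y T Ob \<pi>"
  have rom: "romdp X Y A T Ob R" by fact
  have pol: "\<forall>j<Y. \<pi> j < A" using assms(4) unfolding policy_def by simp
  have erg: "ergodic X P" using assms(2,4) unfolding assumption1_def P_def by blast
  have irr: "\<forall>i<X. \<forall>i'<X. \<exists>n. 0 < nstep X P n i' i" using erg unfolding ergodic_def by blast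
  have st: "stationary X P \<rho>" using assms(5) P_def by simp
  have Pnn: "0 \<le> P a b" if "a < X" "b < X" for a b
    unfolding P_def induced_kernel_def using rom pol that unfolding romdp_def
    by (auto intro!: sum_nonneg mult_nonneg_nonneg)
  have rnn: "\<forall>i<X. 0 \<le> \<rho> i" using st unfolding stationary_def by blast
  have r1: "(\<Sum>i<X. \<rho> i) = 1" using st unfolding stationary_def by blast
  have "\<exists>k<X. 0 < \<rho> k"
  proof (rule ccontr)
    assume "\<not> ?thesis"
    then have "\<forall>k<X. \<rho> k = 0" using rnn by force
    then have "(\<Sum>i<X. \<rho> i) = 0" by simp
    then show False using r1 by simp
  qed
  then obtain k where k: "k < X" "0 < \<rho> k" by blast
  have rpos: "0 < \<rho> i" if i: "i < X" for i
  proof -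
    obtain n where n: "0 < nstep X P n i k" using irr k i by blast
    have "\<rho> i = (\<Sum>i'<X. nstep X P n i i' * \<rho> i')" using stat_nstep[OF st i] .
    also have "\<dots> \<ge> nstep X P n i k * \<rho> k"
    proof (rule member_le_sum)
      fix x assume x: "x \<in> {..<X} - {k}"
      have "0 \<le> nstep X P n i x" using nstep_nonneg[of X P i x n] Pnn i x by blast
      then show "0 \<le> nstep X P n i x * \<rho> x" using rnn x by simp
    qed (use k in auto)
    finally show ?thesis using n k mult_pos_pos[of "nstep X P n i k" "\<rho> k"] by linarith
  qed
  have Obnn: "\<forall>j<Y. \<forall>i<X. 0 \<le> Ob j i" using rom unfolding romdp_def by simp
  have jnn: "0 \<le> joint_xa Y Ob \<pi> \<rho> i l" if "i < X" for i l
  proof -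
    have "0 \<le> (\<Sum>j\<in>{j. j < Y \<and> \<pi> j = l}. Ob j i)"
      by (rule sum_nonneg) (use that Obnn in blast)
    then show ?thesis unfolding joint_xa_def using that rnn by simp
  qed
  have ex1: "\<forall>j<Y. \<exists>!i. i < X \<and> 0 < Ob j i" using rom unfolding romdp_def by (elim conjE) assumption
  have unc: "unclustered X Y A Ob \<pi> \<rho> = {}"
  proof -
    { fix j assume j: "j < Y"
      have "\<exists>!i. i < X \<and> 0 < Ob j i" using ex1 j by simp
      then obtain i where i: "i < X" "0 < Ob j i" by (auto simp only: Ex1_def)
      define l where "l = \<pi> j"
      have lA: "l < A" using pol j l_def by simp
      have s: "0 < (\<Sum>j'\<in>{j'. j' < Y \<and> \<pi> j' = l}. Ob j' i)"
      proof -
        have "Ob j i \<le> (\<Sum>j'\<in>{j'. j' < Y \<and> \<pi> j' = l}. Ob j' i)"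
          using j i Obnn l_def by (intro member_le_sum) auto
        then show ?thesis using i by simp
      qed
      have ji: "0 < joint_xa Y Ob \<pi> \<rho> i l" unfolding joint_xa_def using s rpos i by simp
      have "joint_xa Y Ob \<pi> \<rho> i l \<le> (\<Sum>k<X. joint_xa Y Ob \<pi> \<rho> k l)"
        using i jnn by (intro member_le_sum) auto
      then have "0 < omega X Y Ob \<pi> \<rho> l i" unfolding omega_def using ji by simp
      then have iX: "i \<in> Xsupp X Y Ob \<pi> \<rho> l" unfolding Xsupp_def using i by simp
      have "0 < V2 Y Ob \<pi> l j i" unfolding V2_def using s i l_def by simp
      then have "j \<in> cluster Y Ob \<pi> l i" unfolding cluster_def using j by simp
      then have "j \<notin> unclustered X Y A Ob \<pi> \<rho>" unfolding unclustered_def using lA iX by blast }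
    then show ?thesis unfolding unclustered_def by auto
  qed
  have aeq: "aux_states X Y A Ob \<pi> \<rho> = {cluster Y Ob \<pi> l i | l i. l < A \<and> i \<in> Xsupp X Y Ob \<pi> \<rho> l}"
    unfolding aux_states_def unc by simp
  have "aux_states X Y A Ob \<pi> \<rho> \<subseteq> (\<lambda>(l,i). cluster Y Ob \<pi> l i) ` ({..<A} \<times> {..<X})"
  proof
    fix S assume "S \<in> aux_states X Y A Ob \<pi> \<rho>"
    then obtain l i where li: "S = cluster Y Ob \<pi> l i" "l < A" "i \<in> Xsupp X Y Ob \<pi> \<rho> l"
      unfolding aeq by blast
    then have "(l, i) \<in> {..<A} \<times> {..<X}" unfolding Xsupp_def by simp
    then show "S \<in> (\<lambda>(l,i). cluster Y Ob \<pi> l i) ` ({..<A} \<times> {..<X})"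
      using li(1) by force
  qed
  then have "card (aux_states X Y A Ob \<pi> \<rho>) \<le> card ((\<lambda>(l,i). cluster Y Ob \<pi> l i) ` ({..<A} \<times> {..<X}))"
    by (rule card_mono[rotated]) simp_all
  also have "\<dots> \<le> card ({..<A} \<times> {..<X})" by (rule card_image_le) simp
  finally show ?thesis by (simp add: card_cartesian_product)
qed

end
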